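(* Let $G=(V,E)$ be a simple graph with adjacency matrix $A$, let $x$ be a solution of $\mathrm{LCP}(A+I,-\mathbf{e})$, and let $S$ be a maximal independent set of $G$ with $S\subseteq\sigma(x)$. Then $\mathbf{e}^\top x\leq |S|$.
   Context: $x$ solves $\mathrm{LCP}(A+I,-\mathbf{e})$ iff $x\geq 0$, $(A+I)x\geq\mathbf{e}$ and $x^\top((A+I)x-\mathbf{e})=0$, where $I$ is the identity and $\mathbf{e}$ the all-ones vector. $\sigma(x):=\{i\in V\mid x_i>0\}$ is the support of $x$. *)

theory Defs
  imports Complex_Main
begin

definition simple_graph :: "'a set \<Rightarrow> ('a \<Rightarrow> 'a \<Rightarrow> bool) \<Rightarrow> bool" where
  "simple_graph V E \<longleftrightarrow> finite V \<and> (\<forall>u v. E u v \<longrightarrow> u \<in> V \<and> v \<in> V)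
     \<and> (\<forall>u v. E u v \<longrightarrow> E v u) \<and> (\<forall>v. \<not> E v v)"

definition adj_matrix :: "('a \<Rightarrow> 'a \<Rightarrow> bool) \<Rightarrow> 'a \<Rightarrow> 'a \<Rightarrow> real" where
  "adj_matrix E i j = (if E i j then 1 else 0)"

definition id_matrix :: "'a \<Rightarrow> 'a \<Rightarrow> real" where
  "id_matrix i j = (if i = j then 1 else 0)"

definition mat_vec :: "'a set \<Rightarrow> ('a \<Rightarrow> 'a \<Rightarrow> real) \<Rightarrow> ('a \<Rightarrow> real) \<Rightarrow> 'a \<Rightarrow> real" where
  "mat_vec V M x i = (\<Sum>j\<in>V. M i j * x j)"

definition solves_LCP :: "'a set \<Rightarrow> ('a \<Rightarrow> 'a \<Rightarrow> real) \<Rightarrow> ('a \<Rightarrow> real) \<Rightarrow> ('a \<Rightarrow> real) \<Rightarrow> bool" where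
  "solves_LCP V M q x \<longleftrightarrow>
     (\<forall>i\<in>V. x i \<ge> 0) \<and> (\<forall>i\<in>V. mat_vec V M x i + q i \<ge> 0)
     \<and> (\<Sum>i\<in>V. x i * (mat_vec V M x i + q i)) = 0"

definition supp :: "'a set \<Rightarrow> ('a \<Rightarrow> real) \<Rightarrow> 'a set" where
  "supp V x = {i \<in> V. x i > 0}"

definition independent_set :: "'a set \<Rightarrow> ('a \<Rightarrow> 'a \<Rightarrow> bool) \<Rightarrow> 'a set \<Rightarrow> bool" where
  "independent_set V E S \<longleftrightarrow> S \<subseteq> V \<and> (\<forall>u\<in>S. \<forall>v\<in>S. \<not> E u v)"

definition maximal_independent_set :: "'a set \<Rightarrow> ('a \<Rightarrow> 'a \<Rightarrow> bool) \<Rightarrow> 'a set \<Rightarrow> bool" where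
  "maximal_independent_set V E S \<longleftrightarrow> independent_set V E S \<and>
     (\<forall>T. independent_set V E T \<and> S \<subseteq> T \<longrightarrow> T = S)"

end

theory Submission
  imports Defs
begin

theorem lemma3:
  fixes V :: "'a set" and E :: "'a \<Rightarrow> 'a \<Rightarrow> bool" and x :: "'a \<Rightarrow> real" and S :: "'a set"
  assumes "simple_graph V E"
    and "solves_LCP V (\<lambda>i j. adj_matrix E i j + id_matrix i j) (\<lambda>_. -1) x"
    and "maximal_independent_set V E S"
    and "S \<subseteq> supp V x"
  shows "(\<Sum>i\<in>V. x i) \<le> real (card S)"
proof -
  define M where "M = (\<lambda>i j. adj_matrix E i j + id_matrix i j)"
  have fin: "finite V" and sym: "\<And>u v. E u v \<Longrightarrow> E v u"
    using assms(1) unfolding simple_graph_def by auto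
  have Mnn: "\<And>i j. M i j \<ge> 0" unfolding M_def adj_matrix_def id_matrix_def by auto
  have Msym: "\<And>i j. M i j = M j i" unfolding M_def adj_matrix_def id_matrix_def
    using sym by auto
  have xnn: "\<forall>i\<in>V. x i \<ge> 0" and feas: "\<forall>i\<in>V. mat_vec V M x i - 1 \<ge> 0"
    and comp: "(\<Sum>i\<in>V. x i * (mat_vec V M x i - 1)) = 0"
    using assms(2) unfolding solves_LCP_def M_def by auto
  have "\<forall>i\<in>V. x i * (mat_vec V M x i - 1) = 0"
    using sum_nonneg_eq_0_iff[OF fin, of "\<lambda>i. x i * (mat_vec V M x i - 1)"] comp xnn feas
    by auto
  have SV: "S \<subseteq> V" using assms(3) unfolding maximal_independent_set_def independent_set_def by auto
  have finS: "finite S" using SV fin finite_subset by blast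
  have eq1: "\<forall>i\<in>S. mat_vec V M x i = 1"
  proof
    fix i assume "i \<in> S"
    then have "i \<in> V" "x i > 0" using assms(4) unfolding supp_def by auto
    with \<open>\<forall>i\<in>V. x i * (mat_vec V M x i - 1) = 0\<close> show "mat_vec V M x i = 1" by auto
  qed
  have cov: "(\<Sum>i\<in>S. M i j) \<ge> 1" if "j \<in> V" for j
  proof (cases "j \<in> S")
    case True
    have "M j j \<ge> 1" unfolding M_def adj_matrix_def id_matrix_def by auto
    moreover have "M j j \<le> (\<Sum>i\<in>S. M i j)"
      using member_le_sum[of j S "\<lambda>i. M i j"] True Mnn finS by auto
    ultimately show ?thesis by linarith
  next
    case False
    have "\<not> independent_set V E (insert j S)"
    proof
      assume "independent_set V E (insert j S)"
      then have "insert j S = S" using assms(3) unfolding maximal_independent_set_def by blast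
      with False show False by auto
    qed
    moreover have "insert j S \<subseteq> V" using SV that by auto
    ultimately have "\<exists>u\<in>insert j S. \<exists>v\<in>insert j S. E u v"
      unfolding independent_set_def by blast
    moreover have "\<forall>u\<in>S. \<forall>v\<in>S. \<not> E u v"
      using assms(3) unfolding maximal_independent_set_def independent_set_def by blast
    moreover have "\<not> E j j" using assms(1) unfolding simple_graph_def by blast
    ultimately obtain u where u: "u \<in> S" "E u j \<or> E j u" by blast
    then have "E u j" using sym by auto
    then have "M u j \<ge> 1" unfolding M_def adj_matrix_def id_matrix_def by auto
    moreover have "M u j \<le> (\<Sum>i\<in>S. M i j)"
      using member_le_sum[of u S "\<lambda>i. M i j"] u Mnn finS by auto
    ultimately show ?thesis by linarith
  qed
  have "real (card S) = (\<Sum>i\<in>S. mat_vec V M x i)" using eq1 by simp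
  also have "\<dots> = (\<Sum>i\<in>S. \<Sum>j\<in>V. M i j * x j)" unfolding mat_vec_def by simp
  also have "\<dots> = (\<Sum>j\<in>V. \<Sum>i\<in>S. M i j * x j)" by (rule sum.swap)
  also have "\<dots> = (\<Sum>j\<in>V. x j * (\<Sum>i\<in>S. M i j))"
    by (simp add: sum_distrib_left mult.commute)
  finally have cs: "real (card S) = (\<Sum>j\<in>V. x j * (\<Sum>i\<in>S. M i j))" .
  have "(\<Sum>j\<in>V. x j) \<le> (\<Sum>j\<in>V. x j * (\<Sum>i\<in>S. M i j))"
  proof (rule sum_mono)
    fix j assume "j \<in> V"
    then show "x j \<le> x j * (\<Sum>i\<in>S. M i j)"
      using cov[OF \<open>j \<in> V\<close>] xnn mult_left_mono[of 1 "\<Sum>i\<in>S. M i j" "x j"] by auto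
  qed
  with cs show ?thesis by simp
qed

end
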